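(* Let $L$ be a shift and $\mu$ a $\sigma$-invariant, nonatomic, regular Borel probability measure on $L$ that is positive on nonempty cylinders. For each letter $a\in A$ let $I_{L,a}=\{x\in I:\phi^{-1}(\iota(x))\in Cyl_L(a)\}$, where $I=[0,1)$. Then $I=\bigsqcup_{a\in A}I_{L,a}$, and each nonempty $I_{L,a}$ is a right-open interval. Moreover $T_L$ is right-continuous on $I$ and increasing on each $I_{L,a}$.
   Context: $A$ is a finite totally ordered alphabet. $A^{\mathbb N}$ has the lexicographic order and the Cantor topology, and $\sigma$ deletes the first letter. A shift is a closed $L\subseteq A^{\mathbb N}$ with $\sigma(L)\subseteq L$, and $Cyl_L(v)=\{w\in L:v\text{ prefix of }w\}$. For $w\le w'$ in $L$, $[w,w']=\{w''\in L:w\le w''\le w'\}$, and $w_{L,min}=\min L$. Construction. Put $\phi_\mu(w)=\mu([w_{L,min},w])$. Let $Z_0$ be the set of $x\in[0,1]$ with $|\phi_\mu^{-1}(x)|\ge 2$; each such preimage consists of exactly two consecutive words. Let $\hat I=[0,1]\sqcup Z_0^-$, where $Z_0^-=\{z^-:z\in Z_0\}$ is a disjoint copy of $Z_0$. Order $\hat I$ so that $z^-<z$ with nothing in between, extending the order of $[0,1]$, and give it the order topology. Let $\iota$ be the inclusion $[0,1]\to\hat I$, and let $\kappa:\hat I\to[0,1]$ be the identity on $[0,1]$ with $z^-\mapsto z$. Define $\phi(w)=(\phi_\mu(w))^-$ if $\phi_\mu^{-1}(\phi_\mu(w))=\{w,w'\}$ with $w<w'$, and $\phi(w)=\phi_\mu(w)$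 otherwise. Set $\hat T=\phi\circ\sigma\circ\phi^{-1}$ and $T_L=\kappa\circ\hat T\circ\iota:[0,1]\to[0,1]$. *)

theory Defs
  imports "HOL-Analysis.Analysis" "HOL-Probability.Probability"
begin

type_synonym 'a word = "nat \<Rightarrow> 'a"

definition shft :: "'a word \<Rightarrow> 'a word" where
  "shft w = (\<lambda>n. w (Suc n))"

definition lex_less :: "('a::linorder) word \<Rightarrow> 'a word \<Rightarrow> bool" where
  "lex_less w w' \<longleftrightarrow> (\<exists>n. (\<forall>i<n. w i = w' i) \<and> w n < w' n)"

definition lex_le :: "('a::linorder) word \<Rightarrow> 'a word \<Rightarrow> bool" where
  "lex_le w w' \<longleftrightarrow> w = w' \<or> lex_less w w'"

definition cantor_top :: "'a word topology" where
  "cantor_top = product_topology (\<lambda>_. discrete_topology UNIV) UNIV"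

definition is_shift :: "('a::{linorder,finite}) word set \<Rightarrow> bool" where
  "is_shift L \<longleftrightarrow> closedin cantor_top L \<and> shft ` L \<subseteq> L"

definition Cyl :: "'a word set \<Rightarrow> 'a list \<Rightarrow> 'a word set" where
  "Cyl L v = {w \<in> L. \<forall>i<length v. w i = v ! i}"

definition borel_sets_on :: "'a word set \<Rightarrow> 'a word set set" where
  "borel_sets_on L = sigma_sets L {L \<inter> U | U. openin cantor_top U}"

definition is_borel_prob_on :: "'a word set \<Rightarrow> 'a word measure \<Rightarrow> bool" where
  "is_borel_prob_on L M \<longleftrightarrow> prob_space M \<and> space M = L \<and> sets M = borel_sets_on L"

definition shift_invariant :: "'a word measure \<Rightarrow> bool" where
  "shift_invariant M \<longleftrightarrow> shft \<in> measurable M M \<and>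
     (\<forall>A\<in>sets M. emeasure M (shft -` A \<inter> space M) = emeasure M A)"

definition nonatomic :: "'b measure \<Rightarrow> bool" where
  "nonatomic M \<longleftrightarrow> (\<forall>A\<in>sets M. 0 < emeasure M A \<longrightarrow>
      (\<exists>B\<in>sets M. B \<subseteq> A \<and> 0 < emeasure M B \<and> emeasure M B < emeasure M A))"

definition regular_on :: "'a word set \<Rightarrow> 'a word measure \<Rightarrow> bool" where
  "regular_on L M \<longleftrightarrow> (\<forall>A\<in>sets M.
      emeasure M A = (SUP K\<in>{K. compactin cantor_top K \<and> K \<subseteq> A}. emeasure M K) \<and>
      emeasure M A = (INF U\<in>{U. openin (subtopology cantor_top L) U \<and> A \<subseteq> U}. emeasure M U))"

definition wmin :: "('a::linorder) word set \<Rightarrow> 'a word" where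
  "wmin L = (THE w. w \<in> L \<and> (\<forall>w'\<in>L. lex_le w w'))"

definition lex_Icc :: "('a::linorder) word set \<Rightarrow> 'a word \<Rightarrow> 'a word \<Rightarrow> 'a word set" where
  "lex_Icc L w w' = {v \<in> L. lex_le w v \<and> lex_le v w'}"

definition phi_mu :: "('a::linorder) word set \<Rightarrow> 'a word measure \<Rightarrow> 'a word \<Rightarrow> real" where
  "phi_mu L M w = measure M (lex_Icc L (wmin L) w)"

text \<open>The extended interval \<open>\<hat>I\<close> is represented inside \<open>real \<times> bool\<close>:
  \<open>(x, True)\<close> is the point \<open>x \<in> [0,1]\<close>, \<open>(z, False)\<close> is the extra point \<open>z\<^sup>-\<close>.\<close>
definition phi :: "('a::linorder) word set \<Rightarrow> 'a word measure \<Rightarrow> 'a word \<Rightarrow> real \<times> bool" where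
  "phi L M w = (if \<exists>w'. lex_less w w' \<and> {v \<in> L. phi_mu L M v = phi_mu L M w} = {w, w'}
                then (phi_mu L M w, False) else (phi_mu L M w, True))"

definition phi_inv :: "('a::linorder) word set \<Rightarrow> 'a word measure \<Rightarrow> real \<times> bool \<Rightarrow> 'a word" where
  "phi_inv L M = the_inv_into L (phi L M)"

definition iota :: "real \<Rightarrow> real \<times> bool" where
  "iota x = (x, True)"

definition kappa :: "real \<times> bool \<Rightarrow> real" where
  "kappa p = fst p"

definition T_hat :: "('a::linorder) word set \<Rightarrow> 'a word measure \<Rightarrow> real \<times> bool \<Rightarrow> real \<times> bool" where
  "T_hat L M = phi L M \<circ> shft \<circ> phi_inv L M"

definition T_L :: "('a::linorder) word set \<Rightarrow> 'a word measure \<Rightarrow> real \<Rightarrow> real" where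
  "T_L L M = kappa \<circ> T_hat L M \<circ> iota"

definition I_La :: "('a::linorder) word set \<Rightarrow> 'a word measure \<Rightarrow> 'a \<Rightarrow> real set" where
  "I_La L M a = {x \<in> {0..<1}. phi_inv L M (iota x) \<in> Cyl L [a]}"

end

theory Submission
  imports Defs
begin


lemma lex_less_irrefl: "\<not> lex_less w w"
  by (auto simp: lex_less_def)

lemma lex_less_trans:
  assumes "lex_less u v" "lex_less v w" shows "lex_less u w"
proof -
  obtain n1 where n1: "\<forall>i<n1. u i = v i" "u n1 < v n1" using assms(1) by (auto simp: lex_less_def)
  obtain n2 where n2: "\<forall>i<n2. v i = w i" "v n2 < w n2" using assms(2) by (auto simp: lex_less_def)
  show ?thesis
  proof (cases n1 n2 rule: linorder_cases)
    case less
    then show ?thesis using n1 n2 unfolding lex_less_def by (intro exI[of _ n1]) auto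
  next
    case equal
    then show ?thesis using n1 n2 unfolding lex_less_def by (intro exI[of _ n1]) auto
  next
    case greater
    then show ?thesis using n1 n2 unfolding lex_less_def by (intro exI[of _ n2]) auto
  qed
qed

lemma first_diff:
  assumes "u \<noteq> (v::nat \<Rightarrow> 'a)"
  obtains n where "\<forall>i<n. u i = v i" "u n \<noteq> v n"
proof -
  from assms obtain k where "u k \<noteq> v k" by auto
  then have ex: "\<exists>k. u k \<noteq> v k" by blast
  let ?n = "LEAST k. u k \<noteq> v k"
  have "u ?n \<noteq> v ?n" using LeastI_ex[OF ex] .
  moreover have "\<forall>i<?n. u i = v i" using not_less_Least by blast
  ultimately show ?thesis using that by blast
qed

lemma lex_less_total:
  assumes "u \<noteq> v" shows "lex_less u v \<or> lex_less v u"
proof -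
  obtain n where n: "\<forall>i<n. u i = v i" "u n \<noteq> v n" using first_diff[OF assms] by blast
  show ?thesis
  proof (cases "u n < v n")
    case True then show ?thesis using n by (auto simp: lex_less_def)
  next
    case False then have "v n < u n" using n(2) by auto
    then have "lex_less v u" using n(1) unfolding lex_less_def by (intro exI[of _ n]) auto
    then show ?thesis by blast
  qed
qed

lemma lex_less_asym: "lex_less u v \<Longrightarrow> \<not> lex_less v u"
  using lex_less_trans lex_less_irrefl by blast

lemma lex_le_trans: "lex_le u v \<Longrightarrow> lex_le v w \<Longrightarrow> lex_le u w"
  unfolding lex_le_def using lex_less_trans by blast

lemma lex_le_less_trans: "lex_le u v \<Longrightarrow> lex_less v w \<Longrightarrow> lex_less u w"
  unfolding lex_le_def using lex_less_trans by blast

lemma lex_less_le_trans: "lex_less u v \<Longrightarrow> lex_le v w \<Longrightarrow> lex_less u w"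
  unfolding lex_le_def using lex_less_trans by blast

lemma lex_le_antisym: "lex_le u v \<Longrightarrow> lex_le v u \<Longrightarrow> u = v"
  unfolding lex_le_def using lex_less_asym by blast

lemma lex_not_le: "\<not> lex_le u v \<longleftrightarrow> lex_less v u"
  unfolding lex_le_def using lex_less_total lex_less_asym lex_less_irrefl by blast

lemma lex_not_less: "\<not> lex_less u v \<longleftrightarrow> lex_le v u"
  using lex_not_le by blast

lemma lex_sandwich:
  assumes "lex_less u1 v" "lex_le v u2" "\<forall>i<n. u1 i = u2 i"
  shows "\<forall>i<n. v i = u1 i"
proof (rule ccontr)
  assume "\<not> (\<forall>i<n. v i = u1 i)"
  then obtain k where k: "k < n" "v k \<noteq> u1 k" by auto
  then have ex: "\<exists>k. k < n \<and> v k \<noteq> u1 k" by blast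
  define i where "i = (LEAST k. k < n \<and> v k \<noteq> u1 k)"
  have i: "i < n" "v i \<noteq> u1 i" using LeastI_ex[OF ex] unfolding i_def by auto
  have below: "\<forall>j<i. v j = u1 j" using not_less_Least[of _ "\<lambda>k. k < n \<and> v k \<noteq> u1 k"] i(1)
    unfolding i_def by (meson order.strict_trans)
  obtain p where p: "\<forall>j<p. u1 j = v j" "u1 p < v p" using assms(1) by (auto simp: lex_less_def)
  have "p = i"
  proof (rule ccontr)
    assume "p \<noteq> i"
    then show False
    proof (cases "p < i")
      case True then show ?thesis using p below by force
    next
      case False then have "i < p" using \<open>p \<noteq> i\<close> by auto
      then show ?thesis using p i by force
    qed
  qed
  then have gt: "u2 i < v i" using p assms(3) i(1) by auto
  show False
  proof (cases "v = u2")
    case True then show ?thesis using gt by auto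
  next
    case False
    then obtain q where q: "\<forall>j<q. v j = u2 j" "v q < u2 q" using assms(2) by (auto simp: lex_le_def lex_less_def)
    show False
    proof (cases q i rule: linorder_cases)
      case less
      then show ?thesis using q below assms(3) i(1) by auto
    next
      case equal then show ?thesis using q gt by auto
    next
      case greater then show ?thesis using q gt by auto
    qed
  qed
qed

lemma shft_lex_less:
  assumes "u 0 = v 0" shows "lex_less (shft u) (shft v) \<longleftrightarrow> lex_less u v"
proof
  assume "lex_less (shft u) (shft v)"
  then obtain n where "\<forall>i<n. u (Suc i) = v (Suc i)" "u (Suc n) < v (Suc n)" by (auto simp: lex_less_def shft_def)
  then show "lex_less u v" unfolding lex_less_def using assms
    by (intro exI[of _ "Suc n"]) (auto simp: less_Suc_eq_0_disj)
next
  assume "lex_less u v"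
  then obtain n where n: "\<forall>i<n. u i = v i" "u n < v n" by (auto simp: lex_less_def)
  then have "n \<noteq> 0" using assms by (cases n) auto
  then obtain m where "n = Suc m" using not0_implies_Suc by blast
  then show "lex_less (shft u) (shft v)" using n unfolding lex_less_def shft_def
    by (intro exI[of _ m]) auto
qed




definition pclosed :: "'a word set \<Rightarrow> bool" where
  "pclosed S \<longleftrightarrow> (\<forall>w. (\<forall>n. \<exists>s\<in>S. \<forall>i<n. s i = w i) \<longrightarrow> w \<in> S)"

definition fin_dep :: "nat \<Rightarrow> 'a word set \<Rightarrow> bool" where
  "fin_dep n X \<longleftrightarrow> (\<forall>v v'. (\<forall>i<n. v i = v' i) \<longrightarrow> (v \<in> X \<longleftrightarrow> v' \<in> X))"

lemma closed_pclosed: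
  assumes "closedin cantor_top S" shows "pclosed S"
  unfolding pclosed_def
proof (intro allI impI)
  fix w assume H: "\<forall>n. \<exists>s\<in>S. \<forall>i<n. s i = w i"
  show "w \<in> S"
  proof (rule ccontr)
    assume "w \<notin> S"
    have op: "openin cantor_top (UNIV - S)" using assms
      by (simp add: closedin_def cantor_top_def)
    have "\<exists>U. finite {i \<in> UNIV. U i \<noteq> topspace (discrete_topology UNIV)} \<and>
                 (\<forall>i \<in> UNIV. openin (discrete_topology UNIV) (U i)) \<and> w \<in> Pi\<^sub>E UNIV U \<and> Pi\<^sub>E UNIV U \<subseteq> UNIV - S"
      using op \<open>w \<notin> S\<close> unfolding cantor_top_def openin_product_topology_alt by blast
    then obtain U where U: "finite {i. U i \<noteq> UNIV}" "w \<in> Pi\<^sub>E UNIV U" "Pi\<^sub>E UNIV U \<subseteq> UNIV - S"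
      by auto
    obtain n where n: "\<forall>i\<in>{i. U i \<noteq> UNIV}. i < n"
      using U(1) finite_nat_set_iff_bounded by blast
    obtain s where s: "s \<in> S" "\<forall>i<n. s i = w i" using H by blast
    have "s \<in> Pi\<^sub>E UNIV U"
    proof -
      have "s i \<in> U i" for i
      proof (cases "i < n")
        case True then show ?thesis using s U(2) by (auto simp: PiE_def)
      next
        case False then show ?thesis using n by auto
      qed
      then show ?thesis by (auto simp: PiE_def)
    qed
    then show False using U(3) s(1) by auto
  qed
qed

lemma fin_dep_open:
  assumes "fin_dep n X" shows "openin cantor_top X"
  unfolding cantor_top_def openin_product_topology_alt
proof (intro ballI)
  fix x assume x: "x \<in> X"
  define U where "U i = (if i < n then {x i} else UNIV)" for i
  have "{i \<in> UNIV. U i \<noteq> topspace (discrete_topology UNIV)} \<subseteq> {..<n}"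
    by (auto simp: U_def)
  then have "finite {i \<in> UNIV. U i \<noteq> topspace (discrete_topology UNIV)}"
    by (rule finite_subset) simp
  moreover have "x \<in> Pi\<^sub>E UNIV U" by (auto simp: U_def)
  moreover have "Pi\<^sub>E UNIV U \<subseteq> X"
  proof
    fix v assume "v \<in> Pi\<^sub>E UNIV U"
    have "x i = v i" if "i < n" for i
    proof -
      have "v i \<in> U i" using \<open>v \<in> Pi\<^sub>E UNIV U\<close> by (auto simp: PiE_def Pi_def)
      then show ?thesis using that by (simp add: U_def)
    qed
    then have "\<forall>i<n. x i = v i" by blast
    then show "v \<in> X" using assms x unfolding fin_dep_def by blast
  qed
  ultimately show "\<exists>U. finite {i \<in> UNIV. U i \<noteq> topspace (discrete_topology UNIV)} \<and>
       (\<forall>i\<in>UNIV. openin (discrete_topology UNIV) (U i)) \<and> x \<in> Pi\<^sub>E UNIV U \<and> Pi\<^sub>E UNIV U \<subseteq> X"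
    by (intro exI[of _ U]) simp
qed

lemma fin_dep_pclosed:
  assumes "fin_dep n X" shows "pclosed X"
  unfolding pclosed_def
proof (intro allI impI)
  fix w assume H: "\<forall>m. \<exists>s\<in>X. \<forall>i<m. s i = w i"
  obtain s where s: "s \<in> X" "\<forall>i<n. s i = w i" using H by blast
  have "s \<in> X \<longleftrightarrow> w \<in> X" using assms s(2) unfolding fin_dep_def by (elim allE[of _ s] allE[of _ w]) simp
  then show "w \<in> X" using s(1) by simp
qed

lemma pclosed_Int:
  assumes "pclosed S" "pclosed T" shows "pclosed (S \<inter> T)"
  unfolding pclosed_def
proof (intro allI impI)
  fix w assume H: "\<forall>n. \<exists>s\<in>S \<inter> T. \<forall>i<n. s i = w i"
  have "\<forall>n. \<exists>s\<in>S. \<forall>i<n. s i = w i" using H by (meson IntD1)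
  then have "w \<in> S" using assms(1) unfolding pclosed_def by simp
  moreover have "\<forall>n. \<exists>s\<in>T. \<forall>i<n. s i = w i" using H by (meson IntD2)
  then have "w \<in> T" using assms(2) unfolding pclosed_def by simp
  ultimately show "w \<in> S \<inter> T" by simp
qed

lemma pclosed_min:
  fixes S :: "('a::{linorder,finite}) word set"
  assumes "pclosed S" "S \<noteq> {}"
  shows "\<exists>m\<in>S. \<forall>s\<in>S. lex_le m s"
proof -
  define C where "C p = {c. \<exists>s\<in>S. (\<forall>i<length p. s i = p ! i) \<and> s (length p) = c}" for p :: "'a list"
  define pre where "pre = rec_nat [] (\<lambda>n p. p @ [Min (C p)])"
  have pre0: "pre 0 = []" and preS: "pre (Suc n) = pre n @ [Min (C (pre n))]" for n
    by (simp_all add: pre_def)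
  have len: "length (pre n) = n" for n by (induction n) (simp_all add: pre0 preS)
  have inv: "\<exists>s\<in>S. \<forall>i<n. s i = pre n ! i" for n
  proof (induction n)
    case 0 then show ?case using assms(2) by (auto simp: pre0)
  next
    case (Suc n)
    then obtain s where s: "s \<in> S" "\<forall>i<n. s i = pre n ! i" by blast
    have "s n \<in> C (pre n)" using s len by (auto simp: C_def)
    then have ne: "C (pre n) \<noteq> {}" by blast
    have "Min (C (pre n)) \<in> C (pre n)" using Min_in[OF finite ne] .
    then obtain s' where s': "s' \<in> S" "\<forall>i<n. s' i = pre n ! i" "s' n = Min (C (pre n))"
      using len by (auto simp: C_def)
    then show ?case
      by (intro bexI[of _ s']) (auto simp: preS nth_append len less_Suc_eq)
  qed
  have pre_mono: "m \<le> n \<Longrightarrow> i < m \<Longrightarrow> pre n ! i = pre m ! i" for m n i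
  proof (induction n)
    case 0 then show ?case by simp
  next
    case (Suc n) then show ?case
      by (cases "m = Suc n") (auto simp: preS nth_append len)
  qed
  define m where "m i = pre (Suc i) ! i" for i
  have m_pre: "i < n \<Longrightarrow> pre n ! i = m i" for i n
    using pre_mono[of "Suc i" n i] by (simp add: m_def)
  have mS: "m \<in> S"
    using assms(1) unfolding pclosed_def
  proof (elim allE impE)
    show "\<forall>n. \<exists>s\<in>S. \<forall>i<n. s i = m i" using inv m_pre by metis
  qed
  have mC: "m n = Min (C (pre n))" for n by (simp add: m_def preS nth_append len)
  have "lex_le m s" if s: "s \<in> S" for s
  proof (cases "m = s")
    case True then show ?thesis by (simp add: lex_le_def)
  next
    case False
    then obtain k where k: "\<forall>i<k. m i = s i" "m k \<noteq> s k" using first_diff by blast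
    have "s k \<in> C (pre k)" using s k(1) m_pre len by (auto simp: C_def)
    then have "m k \<le> s k" using mC by simp
    then have "m k < s k" using k(2) by simp
    then show ?thesis using k(1) by (auto simp: lex_le_def lex_less_def)
  qed
  then show ?thesis using mS by blast
qed

lemma pclosed_max:
  fixes S :: "('a::{linorder,finite}) word set"
  assumes "pclosed S" "S \<noteq> {}"
  shows "\<exists>m\<in>S. \<forall>s\<in>S. lex_le s m"
proof -
  define C where "C p = {c. \<exists>s\<in>S. (\<forall>i<length p. s i = p ! i) \<and> s (length p) = c}" for p :: "'a list"
  define pre where "pre = rec_nat [] (\<lambda>n p. p @ [Max (C p)])"
  have pre0: "pre 0 = []" and preS: "pre (Suc n) = pre n @ [Max (C (pre n))]" for n
    by (simp_all add: pre_def)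
  have len: "length (pre n) = n" for n by (induction n) (simp_all add: pre0 preS)
  have inv: "\<exists>s\<in>S. \<forall>i<n. s i = pre n ! i" for n
  proof (induction n)
    case 0 then show ?case using assms(2) by (auto simp: pre0)
  next
    case (Suc n)
    then obtain s where s: "s \<in> S" "\<forall>i<n. s i = pre n ! i" by blast
    have "s n \<in> C (pre n)" using s len by (auto simp: C_def)
    then have ne: "C (pre n) \<noteq> {}" by blast
    have "Max (C (pre n)) \<in> C (pre n)" using Max_in[OF finite ne] .
    then obtain s' where s': "s' \<in> S" "\<forall>i<n. s' i = pre n ! i" "s' n = Max (C (pre n))"
      using len by (auto simp: C_def)
    then show ?case
      by (intro bexI[of _ s']) (auto simp: preS nth_append len less_Suc_eq)
  qed
  have pre_mono: "m \<le> n \<Longrightarrow> i < m \<Longrightarrow> pre n ! i = pre m ! i" for m n i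
  proof (induction n)
    case 0 then show ?case by simp
  next
    case (Suc n) then show ?case
      by (cases "m = Suc n") (auto simp: preS nth_append len)
  qed
  define m where "m i = pre (Suc i) ! i" for i
  have m_pre: "i < n \<Longrightarrow> pre n ! i = m i" for i n
    using pre_mono[of "Suc i" n i] by (simp add: m_def)
  have mS: "m \<in> S"
    using assms(1) unfolding pclosed_def
  proof (elim allE impE)
    show "\<forall>n. \<exists>s\<in>S. \<forall>i<n. s i = m i" using inv m_pre by metis
  qed
  have mC: "m n = Max (C (pre n))" for n by (simp add: m_def preS nth_append len)
  have "lex_le s m" if s: "s \<in> S" for s
  proof (cases "m = s")
    case True then show ?thesis by (simp add: lex_le_def)
  next
    case False
    then obtain k where k: "\<forall>i<k. m i = s i" "m k \<noteq> s k" using first_diff by blast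
    have "s k \<in> C (pre k)" using s k(1) m_pre len by (auto simp: C_def)
    then have "s k \<le> m k" using mC by simp
    then have "s k < m k" using k(2) by simp
    then show ?thesis unfolding lex_le_def lex_less_def using k(1) by (intro disjI2 exI[of _ k]) auto
  qed
  then show ?thesis using mS by blast
qed




definition pref :: "'a word \<Rightarrow> nat \<Rightarrow> 'a list" where
  "pref u n = map u [0..<n]"

lemma Cyl_pref: "Cyl L (pref u n) = {v\<in>L. \<forall>i<n. v i = u i}"
  by (auto simp: Cyl_def pref_def)

lemma ex_less_cong: "(\<And>i. i < (n::nat) \<Longrightarrow> P i = Q i) \<Longrightarrow> (\<exists>i<n. P i) = (\<exists>i<n. Q i)"
  by auto

locale sys = prob_space M for M :: "('a::{linorder,finite}) word measure" +
  fixes L :: "'a word set"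
  assumes shift: "is_shift L" and bp: "is_borel_prob_on L M" and inv: "shift_invariant M"
    and na: "nonatomic M" and cylpos: "\<And>v. Cyl L v \<noteq> {} \<Longrightarrow> measure M (Cyl L v) > 0"
begin

lemma spM: "space M = L" using bp by (simp add: is_borel_prob_on_def)
lemma setsM: "sets M = borel_sets_on L" using bp by (simp add: is_borel_prob_on_def)
lemma Lpc: "pclosed L" using shift closed_pclosed by (auto simp: is_shift_def)
lemma shftL: "w \<in> L \<Longrightarrow> shft w \<in> L" using shift by (auto simp: is_shift_def)
lemma L_ne: "L \<noteq> {}" using not_empty spM by simp

lemma basic_sets: "openin cantor_top U \<Longrightarrow> L \<inter> U \<in> sets M"
  unfolding setsM borel_sets_on_def by (rule sigma_sets.Basic) blast

lemma fin_dep_sets: "fin_dep n X \<Longrightarrow> L \<inter> X \<in> sets M"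
  using basic_sets fin_dep_open by blast

lemma open_gt: "openin cantor_top {v. lex_less w v}"
proof -
  have eq: "{v. lex_less w v} = \<Union>(range (\<lambda>n. {v. (\<forall>i<n. w i = v i) \<and> w n < v n}))"
    by (auto simp: lex_less_def)
  have "fin_dep (Suc n) {v. (\<forall>i<n. w i = v i) \<and> w n < v n}" for n
    by (auto simp: fin_dep_def)
  then show ?thesis unfolding eq using fin_dep_open by blast
qed

lemma open_lt: "openin cantor_top {v. lex_less v w}"
proof -
  have eq: "{v. lex_less v w} = \<Union>(range (\<lambda>n. {v. (\<forall>i<n. v i = w i) \<and> v n < w n}))"
    by (auto simp: lex_less_def)
  have "fin_dep (Suc n) {v. (\<forall>i<n. v i = w i) \<and> v n < w n}" for n
    by (auto simp: fin_dep_def)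
  then show ?thesis unfolding eq using fin_dep_open by blast
qed

definition Le where "Le w = {v\<in>L. lex_le v w}"
definition F where "F w = measure M (Le w)"

lemma Le_sets: "Le w \<in> sets M"
proof -
  have "Le w = space M - (L \<inter> {v. lex_less w v})"
    by (auto simp: Le_def spM lex_not_le[symmetric])
  then show ?thesis using basic_sets[OF open_gt] by simp
qed

lemma Lt_sets: "{v\<in>L. lex_less v w} \<in> sets M"
proof -
  have "{v\<in>L. lex_less v w} = L \<inter> {v. lex_less v w}" by blast
  then show ?thesis using basic_sets[OF open_lt] by simp
qed

lemma sing_sets: "w \<in> L \<Longrightarrow> {w} \<in> sets M"
proof -
  assume "w \<in> L"
  then have "{w} = Le w - {v\<in>L. lex_less v w}"
    by (auto simp: Le_def lex_le_def lex_less_irrefl)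
  then show ?thesis using Le_sets Lt_sets by simp
qed

lemma sing0: assumes "w \<in> L" shows "measure M {w} = 0"
proof -
  have "emeasure M {w} = 0"
  proof (rule ccontr)
    assume "emeasure M {w} \<noteq> 0"
    then have "0 < emeasure M {w}" by (simp add: order_less_le)
    then obtain B where B: "B \<in> sets M" "B \<subseteq> {w}" "0 < emeasure M B" "emeasure M B < emeasure M {w}"
      using na sing_sets[OF assms] unfolding nonatomic_def by blast
    from B(2) have "B = {} \<or> B = {w}" by auto
    then show False using B(3,4) by auto
  qed
  then show ?thesis by (simp add: measure_def)
qed

lemma Cyl_sets: "Cyl L p \<in> sets M"
proof -
  have "Cyl L p = L \<inter> {v. \<forall>i<length p. v i = p ! i}" by (auto simp: Cyl_def)
  moreover have "fin_dep (length p) {v. \<forall>i<length p. v i = p ! i}" by (auto simp: fin_dep_def)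
  ultimately show ?thesis using fin_dep_sets by simp
qed

lemma F_mono: "lex_le v w \<Longrightarrow> F v \<le> F w"
  unfolding F_def by (rule finite_measure_mono[OF _ Le_sets]) (auto simp: Le_def intro: lex_le_trans)

lemma F_le1: "F w \<le> 1" by (simp add: F_def)
lemma F_ge0: "0 \<le> F w" by (simp add: F_def)

lemma F_max: assumes "\<forall>v\<in>L. lex_le v w" shows "F w = 1"
proof -
  have "Le w = space M" using assms by (auto simp: Le_def spM)
  then show ?thesis by (simp add: F_def prob_space)
qed

lemma Key:
  assumes "w1 \<in> L" "w2 \<in> L" "w3 \<in> L" "lex_less w1 w2" "lex_less w2 w3"
  shows "F w1 < F w3"
proof -
  obtain p where p: "\<forall>i<p. w1 i = w2 i" "w1 p < w2 p" using assms(4) by (auto simp: lex_less_def)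
  obtain q where q: "\<forall>i<q. w2 i = w3 i" "w2 q < w3 q" using assms(5) by (auto simp: lex_less_def)
  define k where "k = Suc (max p q)"
  define Z where "Z = Cyl L (pref w2 k)"
  have Z: "Z = {v\<in>L. \<forall>i<k. v i = w2 i}" by (simp add: Z_def Cyl_pref)
  have "w2 \<in> Z" using assms(2) Z by simp
  then have Zpos: "measure M Z > 0" using cylpos unfolding Z_def by blast
  have gt1: "lex_less w1 v" if "v \<in> Z" for v
  proof -
    have "\<forall>i<p. w1 i = v i" "w1 p < v p" using that p by (auto simp: Z k_def)
    then show ?thesis by (auto simp: lex_less_def)
  qed
  have lt3: "lex_less v w3" if "v \<in> Z" for v
  proof -
    have "\<forall>i<q. v i = w3 i" "v q < w3 q" using that q by (auto simp: Z k_def)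
    then show ?thesis by (auto simp: lex_less_def)
  qed
  have disj: "Le w1 \<inter> Z = {}" using gt1 by (auto simp: Le_def lex_not_le[symmetric])
  have sub: "Le w1 \<union> Z \<subseteq> Le w3"
    using lt3 assms(4,5) by (auto simp: Le_def Z lex_le_def intro: lex_le_less_trans lex_less_trans)
  have "F w1 + measure M Z = measure M (Le w1 \<union> Z)"
    using finite_measure_Union[OF Le_sets _ disj] Cyl_sets Z_def by (simp add: F_def)
  also have "\<dots> \<le> F w3" unfolding F_def by (rule finite_measure_mono[OF sub Le_sets])
  finally show ?thesis using Zpos by simp
qed

lemma F_cyl:
  assumes "lex_less u1 u2" "\<forall>i<n. u1 i = u2 i"
  shows "F u2 \<le> F u1 + measure M (Cyl L (pref u1 n))"
proof -
  have "Le u2 \<subseteq> Le u1 \<union> Cyl L (pref u1 n)"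
  proof
    fix v assume v: "v \<in> Le u2"
    show "v \<in> Le u1 \<union> Cyl L (pref u1 n)"
    proof (cases "lex_le v u1")
      case True then show ?thesis using v by (auto simp: Le_def)
    next
      case False
      then have "lex_less u1 v" by (simp add: lex_not_le)
      then have "\<forall>i<n. v i = u1 i" using lex_sandwich[OF _ _ assms(2)] v by (auto simp: Le_def)
      then show ?thesis using v by (auto simp: Le_def Cyl_pref)
    qed
  qed
  then have "F u2 \<le> measure M (Le u1 \<union> Cyl L (pref u1 n))"
    unfolding F_def by (intro finite_measure_mono) (auto intro: Le_sets Cyl_sets)
  also have "\<dots> \<le> F u1 + measure M (Cyl L (pref u1 n))"
    unfolding F_def by (rule measure_Un_le[OF Le_sets Cyl_sets])
  finally show ?thesis .
qed

lemma cyl_lim: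
  assumes "u \<in> L" shows "(\<lambda>n. measure M (Cyl L (pref u n))) \<longlonglongrightarrow> 0"
proof -
  have dec: "decseq (\<lambda>n. Cyl L (pref u n))"
    unfolding decseq_def Cyl_pref by auto
  have "(\<Inter>n. Cyl L (pref u n)) = {u}"
  proof
    show "(\<Inter>n. Cyl L (pref u n)) \<subseteq> {u}"
    proof
      fix v assume "v \<in> (\<Inter>n. Cyl L (pref u n))"
      then have "v i = u i" for i by (auto simp: Cyl_pref dest: spec[of _ "Suc i"])
      then show "v \<in> {u}" by auto
    qed
    show "{u} \<subseteq> (\<Inter>n. Cyl L (pref u n))" using assms by (auto simp: Cyl_pref)
  qed
  then show ?thesis
    using finite_Lim_measure_decseq[OF _ dec] Cyl_sets sing0[OF assms] by auto
qed

lemma surj: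
  assumes "0 \<le> x" "x \<le> 1" shows "\<exists>w\<in>L. F w = x"
proof -
  define C where "C = {v\<in>L. x \<le> F v}"
  have pcC: "pclosed C"
    unfolding pclosed_def
  proof (intro allI impI)
    fix w assume H: "\<forall>n. \<exists>s\<in>C. \<forall>i<n. s i = w i"
    have "\<forall>n. \<exists>s\<in>L. \<forall>i<n. s i = w i"
    proof
      fix n obtain s where "s \<in> C" "\<forall>i<n. s i = w i" using H by blast
      then show "\<exists>s\<in>L. \<forall>i<n. s i = w i" unfolding C_def by blast
    qed
    then have "w \<in> L" using Lpc unfolding pclosed_def by blast
    moreover have "x \<le> F w"
    proof (rule ccontr)
      assume "\<not> x \<le> F w"
      then have "0 < x - F w" by simp
      from order_tendstoD(2)[OF cyl_lim[OF \<open>w \<in> L\<close>] this]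
      obtain N where N: "measure M (Cyl L (pref w N)) < x - F w"
        by (auto simp: eventually_sequentially)
      obtain s where s: "s \<in> C" "\<forall>i<N. s i = w i" using H by blast
      have "x \<le> F s" using s(1) by (simp add: C_def)
      moreover have "F s < x"
      proof (cases "s = w")
        case True then show ?thesis using \<open>\<not> x \<le> F w\<close> by simp
      next
        case False
        then consider "lex_less w s" | "lex_less s w" using lex_less_total by blast
        then show ?thesis
        proof cases
          case 1
          have "F s \<le> F w + measure M (Cyl L (pref w N))"
            using F_cyl[OF 1] s(2) by auto
          then show ?thesis using N by simp
        next
          case 2
          then show ?thesis using F_mono[of s w] \<open>\<not> x \<le> F w\<close> by (simp add: lex_le_def)
        qed
      qed
      ultimately show False by simp
    qed
    ultimately show "w \<in> C" by (simp add: C_def)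
  qed
  obtain wmax where wmax: "wmax \<in> L" "\<forall>v\<in>L. lex_le v wmax" using pclosed_max[OF Lpc L_ne] by blast
  have "wmax \<in> C" using F_max[OF wmax(2)] wmax(1) assms by (simp add: C_def)
  then have "C \<noteq> {}" by blast
  then obtain m where m: "m \<in> C" "\<forall>s\<in>C. lex_le m s" using pclosed_min[OF pcC] by blast
  have "F m = x"
  proof (rule ccontr)
    assume "F m \<noteq> x"
    then have gt: "x < F m" using m(1) by (simp add: C_def)
    define A where "A n = L \<inter> {v. \<exists>i<n. (\<forall>j<i. v j = m j) \<and> v i < m i}" for n
    have fdA: "fin_dep n {v. \<exists>i<n. (\<forall>j<i. v j = m j) \<and> v i < m i}" for n
      unfolding fin_dep_def
    proof (intro allI impI)
      fix v v' :: "'a word" assume H: "\<forall>i<n. v i = v' i"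
      have e: "((\<forall>j<i. v j = m j) \<and> v i < m i) \<longleftrightarrow> ((\<forall>j<i. v' j = m j) \<and> v' i < m i)" if "i < n" for i
      proof -
        have "\<forall>j<i. v j = v' j" using H that by simp
        moreover have "v i = v' i" using H that by simp
        ultimately show ?thesis by auto
      qed
      show "(v \<in> {v. \<exists>i<n. (\<forall>j<i. v j = m j) \<and> v i < m i}) =
                 (v' \<in> {v. \<exists>i<n. (\<forall>j<i. v j = m j) \<and> v i < m i})"
        unfolding mem_Collect_eq by (rule ex_less_cong) (rule e)
    qed
    have Asets: "A n \<in> sets M" for n unfolding A_def using fin_dep_sets[OF fdA] .
    have incA: "incseq A" unfolding incseq_def
    proof (intro allI impI subsetI)
      fix k n v assume kn: "k \<le> n" and v: "v \<in> A k"
      then obtain i where i: "v \<in> L" "i < k" "\<forall>j<i. v j = m j" "v i < m i" unfolding A_def by blast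
      then have "i < n" using kn by simp
      then show "v \<in> A n" using i unfolding A_def by blast
    qed
    have "Le m \<subseteq> (\<Union>n. A n) \<union> {m}"
    proof
      fix v assume v: "v \<in> Le m"
      show "v \<in> (\<Union>n. A n) \<union> {m}"
      proof (cases "v = m")
        case False
        then have "lex_less v m" using v by (auto simp: Le_def lex_le_def)
        then obtain i where "\<forall>j<i. v j = m j" "v i < m i" by (auto simp: lex_less_def)
        then have "v \<in> A (Suc i)" using v by (auto simp: A_def Le_def)
        then show ?thesis by blast
      qed simp
    qed
    have UA: "(\<Union>n. A n) \<in> sets M" using Asets by blast
    have mL: "m \<in> L" using m(1) by (simp add: C_def)
    have "F m \<le> measure M ((\<Union>n. A n) \<union> {m})"
      unfolding F_def by (rule finite_measure_mono[OF \<open>Le m \<subseteq> _\<close>]) (use UA sing_sets[OF mL] in blast)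
    also have "\<dots> \<le> measure M (\<Union>n. A n) + measure M {m}"
      by (rule measure_Un_le[OF UA sing_sets[OF mL]])
    finally have "x < measure M (\<Union>n. A n)" using gt sing0[OF mL] by simp
    from order_tendstoD(1)[OF finite_Lim_measure_incseq[OF _ incA] this] Asets
    obtain n where n: "x < measure M (A n)" by (auto simp: eventually_sequentially)
    have "A n \<noteq> {}" using n assms(1) by auto
    moreover have "pclosed (A n)" unfolding A_def by (rule pclosed_Int[OF Lpc fin_dep_pclosed[OF fdA]])
    ultimately obtain p where p: "p \<in> A n" "\<forall>v\<in>A n. lex_le v p" using pclosed_max by blast
    have "A n \<subseteq> Le p" using p(2) by (auto simp: Le_def A_def)
    then have "measure M (A n) \<le> F p" unfolding F_def by (rule finite_measure_mono[OF _ Le_sets])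
    then have "p \<in> C" using n p(1) by (auto simp: C_def A_def)
    then have "lex_le m p" using m(2) by blast
    moreover have "lex_less p m" using p(1) by (auto simp: A_def lex_less_def)
    ultimately show False using lex_le_less_trans lex_less_irrefl by blast
  qed
  then show ?thesis using m(1) by (auto simp: C_def)
qed

end



context sys begin

lemma wmin_prop: "wmin L \<in> L \<and> (\<forall>v\<in>L. lex_le (wmin L) v)"
proof -
  obtain m where m: "m \<in> L" "\<forall>s\<in>L. lex_le m s" using pclosed_min[OF Lpc L_ne] by blast
  have ex1: "\<exists>!w. w \<in> L \<and> (\<forall>w'\<in>L. lex_le w w')"
    using m lex_le_antisym by (intro ex1I[of _ m]) auto
  show ?thesis using theI'[OF ex1] unfolding wmin_def by simp
qed

lemma phi_mu_F: "phi_mu L M w = F w"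
proof -
  have "lex_Icc L (wmin L) w = Le w" using wmin_prop by (auto simp: lex_Icc_def Le_def)
  then show ?thesis by (simp add: phi_mu_def F_def)
qed

lemma three:
  assumes "a \<in> L" "b \<in> L" "c \<in> L" "a \<noteq> b" "b \<noteq> c" "a \<noteq> c" "F a = F b" "F b = F c"
  shows False
proof -
  have K: "False" if "x \<in> {a,b,c}" "y \<in> {a,b,c}" "z \<in> {a,b,c}" "lex_less x y" "lex_less y z" for x y z
  proof -
    have "F x < F z" using Key[of x y z] that assms(1-3) by auto
    moreover have "F x = F a" "F z = F a" using that(1,3) assms(7,8) by auto
    ultimately show False by simp
  qed
  show False
    using lex_less_total[OF assms(4)] lex_less_total[OF assms(5)] lex_less_total[OF assms(6)]
      K[of a b c] K[of c b a] K[of b a c] K[of c a b] K[of a c b] K[of b c a]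
    by blast
qed

definition P where "P w \<longleftrightarrow> (\<exists>w'. lex_less w w' \<and> {v \<in> L. F v = F w} = {w, w'})"

lemma phi_eq: "phi L M w = (F w, \<not> P w)"
  by (simp add: phi_def phi_mu_F P_def)

lemma pair_P:
  assumes "v1 \<in> L" "v2 \<in> L" "lex_less v1 v2" "F v1 = F v2"
  shows "P v1 \<and> \<not> P v2"
proof
  have "{v \<in> L. F v = F v1} = {v1, v2}"
  proof
    show "{v \<in> L. F v = F v1} \<subseteq> {v1, v2}"
    proof
      fix v assume v: "v \<in> {v \<in> L. F v = F v1}"
      show "v \<in> {v1, v2}"
      proof (rule ccontr)
        assume "v \<notin> {v1, v2}"
        then show False using three[of v1 v2 v] v assms lex_less_irrefl by auto
      qed
    qed
    show "{v1, v2} \<subseteq> {v \<in> L. F v = F v1}" using assms by auto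
  qed
  then show "P v1" using assms(3) unfolding P_def by blast
  show "\<not> P v2"
  proof
    assume "P v2"
    then obtain w' where w': "lex_less v2 w'" "{v \<in> L. F v = F v2} = {v2, w'}" unfolding P_def by blast
    have "v1 \<in> {v2, w'}" using w'(2) assms by blast
    then have "v1 = w'" using assms(3) lex_less_irrefl by auto
    then show False using w'(1) assms(3) lex_less_asym by blast
  qed
qed

lemma inj_phi: "inj_on (phi L M) L"
proof (rule inj_onI)
  fix v1 v2 assume v: "v1 \<in> L" "v2 \<in> L" "phi L M v1 = phi L M v2"
  then have F: "F v1 = F v2" and Peq: "P v1 = P v2" by (simp_all add: phi_eq)
  show "v1 = v2"
  proof (rule ccontr)
    assume "v1 \<noteq> v2"
    then consider "lex_less v1 v2" | "lex_less v2 v1" using lex_less_total by blast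
    then show False
    proof cases
      case 1 then show ?thesis using pair_P[OF v(1,2) 1 F] Peq by simp
    next
      case 2 then show ?thesis using pair_P[OF v(2,1) 2 F[symmetric]] Peq by simp
    qed
  qed
qed

definition g where "g x = phi_inv L M (iota x)"

lemma g_props:
  assumes "0 \<le> x" "x \<le> 1"
  shows "g x \<in> L \<and> F (g x) = x \<and> (\<forall>v\<in>L. F v = x \<longrightarrow> lex_le v (g x))"
proof -
  obtain w where w: "w \<in> L" "F w = x" using surj[OF assms] by blast
  obtain wm where wm: "wm \<in> L" "F wm = x" "\<forall>v\<in>L. F v = x \<longrightarrow> lex_le v wm"
  proof (cases "\<exists>w'\<in>L. F w' = x \<and> lex_less w w'")
    case True
    then obtain w' where w': "w' \<in> L" "F w' = x" "lex_less w w'" by blast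
    have "lex_le v w'" if "v \<in> L" "F v = x" for v
    proof (cases "v = w \<or> v = w'")
      case True then show ?thesis using w' by (auto simp: lex_le_def)
    next
      case False
      then show ?thesis using three[of w w' v] w w' that lex_less_irrefl by auto
    qed
    then show ?thesis using that w' by blast
  next
    case False
    have "lex_le v w" if "v \<in> L" "F v = x" for v
      using False that lex_not_le by blast
    then show ?thesis using that w by blast
  qed
  have "\<not> P wm"
  proof
    assume "P wm"
    then obtain w' where w': "lex_less wm w'" "{v \<in> L. F v = F wm} = {wm, w'}" unfolding P_def by blast
    then have "w' \<in> L" "F w' = x" using wm(2) by blast+
    then have "lex_le w' wm" using wm(3) by blast
    then show False using w'(1) lex_le_less_trans lex_less_irrefl by blast
  qed
  then have "phi L M wm = (x, True)" using wm(2) by (simp add: phi_eq)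
  then have "g x = wm" unfolding g_def phi_inv_def iota_def
    using the_inv_into_f_eq[OF inj_phi _ wm(1)] by simp
  then show ?thesis using wm by simp
qed

lemma T_eq: "T_L L M x = F (shft (g x))"
  by (simp add: T_L_def T_hat_def kappa_def g_def phi_eq)

lemma g_mono:
  assumes "0 \<le> x" "x < y" "y \<le> 1" shows "lex_less (g x) (g y)"
proof (rule ccontr)
  assume "\<not> lex_less (g x) (g y)"
  then have "lex_le (g y) (g x)" by (simp add: lex_not_less)
  then have "F (g y) \<le> F (g x)" by (rule F_mono)
  then show False using g_props[of x] g_props[of y] assms by simp
qed

end



lemma fin_dep_ex: "fin_dep n {v. \<exists>i<n. (\<forall>j<i. v j = m j) \<and> R i (v i)}"
  unfolding fin_dep_def
proof (intro allI impI)
  fix v v' :: "'a word" assume H: "\<forall>i<n. v i = v' i"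
  have e: "((\<forall>j<i. v j = m j) \<and> R i (v i)) \<longleftrightarrow> ((\<forall>j<i. v' j = m j) \<and> R i (v' i))" if "i < n" for i
  proof -
    have "\<forall>j<i. v j = v' j" using H that by simp
    moreover have "v i = v' i" using H that by simp
    ultimately show ?thesis by auto
  qed
  show "(v \<in> {v. \<exists>i<n. (\<forall>j<i. v j = m j) \<and> R i (v i)}) =
        (v' \<in> {v. \<exists>i<n. (\<forall>j<i. v j = m j) \<and> R i (v i)})"
    unfolding mem_Collect_eq by (rule ex_less_cong) (rule e)
qed

context sys begin

lemma I_eq: "I_La L M a = {x\<in>{0..<1}. g x 0 = a}"
proof -
  have "g x \<in> L" if "x \<in> {0..<1}" for x using g_props[of x] that by simp
  then show ?thesis by (auto simp: I_La_def g_def[symmetric] Cyl_def)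
qed

lemma interval:
  assumes "I_La L M a \<noteq> {}" shows "\<exists>b c. b < c \<and> I_La L M a = {b..<c}"
proof -
  obtain x0 where x0: "x0 \<in> {0..<1}" "g x0 0 = a" using assms I_eq by auto
  have gx0: "g x0 \<in> L" using g_props[of x0] x0 by simp
  define CA where "CA = L \<inter> {v. \<exists>i<1. (\<forall>j<i. v j = g x0 j) \<and> v i = a}"
  have CA: "CA = {v\<in>L. v 0 = a}" by (auto simp: CA_def)
  have "pclosed CA" unfolding CA_def by (rule pclosed_Int[OF Lpc fin_dep_pclosed[OF fin_dep_ex]])
  moreover have "CA \<noteq> {}" using gx0 x0 CA by auto
  ultimately obtain ma where ma: "ma \<in> CA" "\<forall>v\<in>CA. lex_le ma v" using pclosed_min by blast
  define b where "b = F ma"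
  have b1: "b \<le> x" if "0 \<le> x" "x < 1" "g x 0 = a" for x
  proof -
    have "g x \<in> CA" using g_props[of x] that CA by simp
    then have "lex_le ma (g x)" using ma by blast
    then show ?thesis using F_mono g_props[of x] that b_def by fastforce
  qed
  have b2: "\<not> g x 0 < a" if "0 \<le> x" "x < 1" "b \<le> x" for x
  proof
    assume lt: "g x 0 < a"
    have gp: "g x \<in> L" "F (g x) = x" "\<forall>v\<in>L. F v = x \<longrightarrow> lex_le v (g x)" using g_props[of x] that by auto
    have "lex_less (g x) ma" using lt ma CA unfolding lex_less_def by (intro exI[of _ 0]) auto
    then have "F (g x) \<le> F ma" using F_mono lex_le_def by blast
    then have "F ma = x" using gp that b_def by simp
    then have "lex_le ma (g x)" using gp ma CA by auto
    then show False using \<open>lex_less (g x) ma\<close> lex_le_less_trans lex_less_irrefl by blast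
  qed
  obtain c where c0: "c \<le> 1"
    and c1: "\<And>x. 0 \<le> x \<Longrightarrow> x < 1 \<Longrightarrow> g x 0 = a \<Longrightarrow> x < c"
    and c2: "\<And>x. 0 \<le> x \<Longrightarrow> x < 1 \<Longrightarrow> a < g x 0 \<Longrightarrow> c \<le> x"
  proof (cases "\<exists>v\<in>L. a < v 0")
    case True
    define CB where "CB = L \<inter> {v. \<exists>i<1. (\<forall>j<i. v j = g x0 j) \<and> a < v i}"
    have CB: "CB = {v\<in>L. a < v 0}" by (auto simp: CB_def)
    have "pclosed CB" unfolding CB_def by (rule pclosed_Int[OF Lpc fin_dep_pclosed[OF fin_dep_ex]])
    moreover have "CB \<noteq> {}" using True CB by auto
    ultimately obtain mb where mb: "mb \<in> CB" "\<forall>v\<in>CB. lex_le mb v" using pclosed_min by blast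
    show ?thesis
    proof (rule that[of "F mb"])
      show "F mb \<le> 1" by (rule F_le1)
    next
      fix x :: real assume x: "0 \<le> x" "x < 1" "g x 0 = a"
      have gp: "g x \<in> L" "F (g x) = x" "\<forall>v\<in>L. F v = x \<longrightarrow> lex_le v (g x)" using g_props[of x] x by auto
      have lt: "lex_less (g x) mb" using x(3) mb CB unfolding lex_less_def by (intro exI[of _ 0]) auto
      then have "F (g x) \<le> F mb" using F_mono lex_le_def by blast
      moreover have "F mb \<noteq> x"
      proof
        assume "F mb = x"
        then have "lex_le mb (g x)" using gp mb CB by auto
        then show False using lt lex_le_less_trans lex_less_irrefl by blast
      qed
      ultimately show "x < F mb" using gp by simp
    next
      fix x :: real assume x: "0 \<le> x" "x < 1" "a < g x 0"
      have gp: "g x \<in> L" "F (g x) = x" using g_props[of x] x by auto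
      then have "g x \<in> CB" using x CB by simp
      then have "lex_le mb (g x)" using mb by blast
      then show "F mb \<le> x" using F_mono gp by fastforce
    qed
  next
    case False
    show ?thesis
    proof (rule that[of 1])
      fix x :: real assume x: "0 \<le> x" "x < 1" "a < g x 0"
      have "g x \<in> L" using g_props[of x] x by auto
      then show "1 \<le> x" using False x by auto
    qed auto
  qed
  have "I_La L M a = {b..<c}"
  proof
    show "I_La L M a \<subseteq> {b..<c}" using b1 c1 I_eq by auto
    show "{b..<c} \<subseteq> I_La L M a"
    proof
      fix x assume x: "x \<in> {b..<c}"
      have "0 \<le> b" using F_ge0 b_def by simp
      then have x01: "0 \<le> x" "x < 1" using x c0 by auto
      have "g x 0 = a"
      proof (rule ccontr)
        assume "g x 0 \<noteq> a"
        then consider "g x 0 < a" | "a < g x 0" by fastforce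
        then show False
        proof cases
          case 1 then show ?thesis using b2[OF x01] x by auto
        next
          case 2 then show ?thesis using c2[OF x01] x by auto
        qed
      qed
      then show "x \<in> I_La L M a" using I_eq x01 by auto
    qed
  qed
  moreover have "b < c" using b1[of x0] c1[of x0] x0 by auto
  ultimately show ?thesis by blast
qed

end



context sys begin

lemma rcont:
  assumes x: "0 \<le> x" "x < 1" shows "continuous (at_right x) (T_L L M)"
  unfolding continuous_within tendsto_iff eventually_at_right_field dist_real_def
proof (intro allI impI)
  fix e :: real assume e: "0 < e"
  define w where "w = g x"
  have gp: "w \<in> L" "F w = x" "\<forall>v\<in>L. F v = x \<longrightarrow> lex_le v w" using g_props[of x] x w_def by auto
  define s where "s = shft w"
  have sL: "s \<in> L" using shftL gp s_def by simp
  from order_tendstoD(2)[OF cyl_lim[OF sL] e]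
  obtain n where n: "measure M (Cyl L (pref s n)) < e" by (auto simp: eventually_sequentially)
  define Q where "Q = L \<inter> {v. \<exists>i<Suc n. (\<forall>j<i. v j = w j) \<and> w i < v i}"
  obtain d where d: "0 < d" "d \<le> 1 - x" and dQ: "\<And>y. x < y \<Longrightarrow> y < x + d \<Longrightarrow> g y \<notin> Q"
  proof (cases "Q = {}")
    case True
    show ?thesis by (rule that[of "1 - x"]) (use x True in auto)
  next
    case False
    have "pclosed Q" unfolding Q_def by (rule pclosed_Int[OF Lpc fin_dep_pclosed[OF fin_dep_ex]])
    then obtain m where m: "m \<in> Q" "\<forall>v\<in>Q. lex_le m v" using pclosed_min False by blast
    have mL: "m \<in> L" using m(1) Q_def by simp
    have wm: "lex_less w m"
    proof -
      obtain i where "\<forall>j<i. m j = w j" "w i < m i" using m(1) Q_def by auto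
      then show ?thesis unfolding lex_less_def by (intro exI[of _ i]) auto
    qed
    then have "x \<le> F m" using F_mono gp(2) lex_le_def by blast
    moreover have "F m \<noteq> x"
    proof
      assume "F m = x"
      then have "lex_le m w" using gp(3) mL by blast
      then show False using wm lex_le_less_trans lex_less_irrefl by blast
    qed
    ultimately have Fm: "x < F m" by simp
    show ?thesis
    proof (rule that[of "min (1 - x) (F m - x)"])
      show "0 < min (1 - x) (F m - x)" using Fm x by simp
      show "min (1 - x) (F m - x) \<le> 1 - x" by simp
      fix y assume y: "x < y" "y < x + min (1 - x) (F m - x)"
      show "g y \<notin> Q"
      proof
        assume "g y \<in> Q"
        then have "lex_le m (g y)" using m(2) by blast
        then have "F m \<le> F (g y)" by (rule F_mono)
        moreover have "F (g y) = y" using g_props[of y] y x by auto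
        ultimately show False using y by simp
      qed
    qed
  qed
  show "\<exists>b>x. \<forall>y>x. y < b \<longrightarrow> \<bar>T_L L M y - T_L L M x\<bar> < e"
  proof (intro exI[of _ "x + d"] conjI allI impI)
    show "x < x + d" using d by simp
    fix y assume y: "x < y" "y < x + d"
    have y01: "0 \<le> y" "y \<le> 1" using y x d by auto
    have gy: "g y \<in> L" using g_props[of y] y01 by auto
    have lt: "lex_less w (g y)" using g_mono[of x y] x y y01 w_def by simp
    then obtain k where k: "\<forall>j<k. w j = g y j" "w k < g y k" by (auto simp: lex_less_def)
    have "\<not> k < Suc n"
    proof
      assume "k < Suc n"
      then have "g y \<in> Q" using k gy unfolding Q_def by auto
      then show False using dQ y by blast
    qed
    then have agree: "\<forall>j<Suc n. w j = g y j" using k(1) by simp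
    then have "w 0 = g y 0" by simp
    then have slt: "lex_less s (shft (g y))" using shft_lex_less[of w "g y"] lt by (simp add: s_def)
    have "\<forall>i<n. s i = shft (g y) i" using agree by (simp add: s_def shft_def)
    then have "F (shft (g y)) \<le> F s + measure M (Cyl L (pref s n))" by (rule F_cyl[OF slt])
    moreover have "F s \<le> F (shft (g y))" using F_mono slt lex_le_def by blast
    ultimately show "\<bar>T_L L M y - T_L L M x\<bar> < e" using n by (simp add: T_eq s_def w_def)
  qed
qed

lemma smono:
  assumes xI: "x \<in> I_La L M a" and yI: "y \<in> I_La L M a" and xy: "x < y"
  shows "T_L L M x < T_L L M y"
proof -
  have x: "0 \<le> x" "x < 1" "g x 0 = a" and y: "0 \<le> y" "y < 1" "g y 0 = a" using xI yI I_eq by auto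
  have gx: "g x \<in> L" "F (g x) = x" and gy: "g y \<in> L" "F (g y) = y" using g_props x y by auto
  have lt: "lex_less (g x) (g y)" using g_mono x y xy by simp
  define s1 where "s1 = shft (g x)"
  define s2 where "s2 = shft (g y)"
  have s12: "lex_less s1 s2" using shft_lex_less[of "g x" "g y"] x(3) y(3) lt by (simp add: s1_def s2_def)
  have "F s1 \<le> F s2" using F_mono s12 lex_le_def by blast
  moreover have "F s1 \<noteq> F s2"
  proof
    assume eq: "F s1 = F s2"
    define B where "B = Le s2 - Le s1"
    have sub12: "Le s1 \<subseteq> Le s2" using s12 by (auto simp: Le_def lex_le_def intro: lex_le_less_trans lex_less_trans)
    have Bs: "B \<in> sets M" using Le_sets B_def by simp
    have mB: "measure M B = 0"
      using finite_measure_Diff[OF Le_sets Le_sets sub12] eq B_def F_def by simp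
    have shm: "shft \<in> measurable M M" and shinv: "\<forall>A\<in>sets M. emeasure M (shft -` A \<inter> space M) = emeasure M A"
      using inv by (auto simp: shift_invariant_def)
    have preB: "shft -` B \<inter> L \<in> sets M" using measurable_sets[OF shm Bs] spM by simp
    have "measure M (shft -` B \<inter> L) = measure M B"
      using shinv Bs spM by (simp add: measure_def)
    then have mpre: "measure M (shft -` B \<inter> L) = 0" using mB by simp
    have "Le (g y) \<subseteq> Le (g x) \<union> (shft -` B \<inter> L)"
    proof
      fix v assume v: "v \<in> Le (g y)"
      show "v \<in> Le (g x) \<union> (shft -` B \<inter> L)"
      proof (cases "lex_le v (g x)")
        case True then show ?thesis using v by (auto simp: Le_def)
      next
        case False
        then have gv: "lex_less (g x) v" by (simp add: lex_not_le)
        have vL: "v \<in> L" and vle: "lex_le v (g y)" using v by (auto simp: Le_def)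
        have "\<forall>i<1. g x i = g y i" using x(3) y(3) by simp
        then have "\<forall>i<(1::nat). v i = g x i" by (rule lex_sandwich[OF gv vle])
        then have v0: "v 0 = a" using x(3) by simp
        have "lex_less s1 (shft v)" using shft_lex_less[of "g x" v] gv v0 x(3) s1_def by simp
        then have "\<not> lex_le (shft v) s1" using lex_not_le by blast
        moreover have "lex_le (shft v) s2"
          using vle shft_lex_less[of v "g y"] v0 y(3) s2_def by (auto simp: lex_le_def)
        ultimately have "shft v \<in> B" using shftL[OF vL] by (simp add: B_def Le_def)
        then show ?thesis using vL by simp
      qed
    qed
    then have "F (g y) \<le> measure M (Le (g x) \<union> (shft -` B \<inter> L))"
      unfolding F_def by (rule finite_measure_mono) (use Le_sets preB in blast)
    also have "\<dots> \<le> F (g x) + measure M (shft -` B \<inter> L)"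
      unfolding F_def by (rule measure_Un_le[OF Le_sets preB])
    finally show False using mpre gx gy xy by simp
  qed
  ultimately show ?thesis by (simp add: T_eq s1_def s2_def)
qed

end

theorem mainTheorem9:
  fixes L :: "('a::{linorder,finite}) word set" and M :: "'a word measure"
  assumes "is_shift L"
    and "is_borel_prob_on L M"
    and "shift_invariant M"
    and "nonatomic M"
    and "regular_on L M"
    and "\<And>v. Cyl L v \<noteq> {} \<Longrightarrow> measure M (Cyl L v) > 0"
  shows "{0..<1} = (\<Union>a. I_La L M a) \<and> disjoint_family (I_La L M)
    \<and> (\<forall>a. I_La L M a \<noteq> {} \<longrightarrow> (\<exists>b c. b < c \<and> I_La L M a = {b..<c}))
    \<and> (\<forall>x\<in>{0..<1}. continuous (at_right x) (T_L L M))
    \<and> (\<forall>a. strict_mono_on (I_La L M a) (T_L L M))"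
proof -
  have "prob_space M" using assms(2) by (simp add: is_borel_prob_on_def)
  then interpret S: sys M L
    using assms by (simp add: sys_def sys_axioms_def)
  have 1: "{0..<1} = (\<Union>a. I_La L M a)" using S.I_eq by auto
  have 2: "disjoint_family (I_La L M)" unfolding disjoint_family_on_def using S.I_eq by auto
  have 3: "\<forall>a. I_La L M a \<noteq> {} \<longrightarrow> (\<exists>b c. b < c \<and> I_La L M a = {b..<c})" using S.interval by blast
  have 4: "\<forall>x\<in>{0..<1}. continuous (at_right x) (T_L L M)" using S.rcont by auto
  have 5: "\<forall>a. strict_mono_on (I_La L M a) (T_L L M)"
    using S.smono by (blast intro: strict_mono_onI)
  show ?thesis using 1 2 3 4 5 by blast
qed


end
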